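(* Consider a Functional DCOP (as defined in the context) in which every utility function is binary and differentiable. Suppose discrete DPOP is applied to it after discretizing the domains so that, for every utility function $f(x_i, x_{i_1}, \dots, x_{i_k})$ handled by an agent $x_i$ with separator agents $x_{i_1},\dots,x_{i_k}$, the domain of $f$ is partitioned into hypercubes of size $m$ (i.e., the distance between two neighbouring discrete points of the same variable is $m$). Assume that $|\nabla f(v)| \le \delta$ for every utility function $f$ of the problem and every point $v$ of its domain, where for $v=(v_i,v_{i_1},\dots,v_{i_k})$, $$|\nabla f(v)| = \left|\frac{\partial f}{\partial x_i}(v)\right| + \left|\frac{\partial f}{\partial x_{i_1}}(v)\right| + \dots + \left|\frac{\partial f}{\partial x_{i_k}}(v)\right|.$$ Then the error bound of discrete DPOP is $|\mathbf{F}|\, m\, \delta$; that is, the utility $\mathbf{F}$ of the complete solution returned by discrete DPOP is at least $\max_{\mathbf{x}} \mathbf{F}(\mathbf{x}) - |\mathbf{F}|\, m\,\delta$, where $|\mathbf{F}|$ is the number of utility functions.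
   Context: A Functional DCOP (F-DCOP) is a tuple $\langle \mathbf{A}, \mathbf{X}, \mathbf{D}, \mathbf{F}, \alpha\rangle$: $\mathbf{A}$ is a finite set of agents; $\mathbf{X}=\{x_1,\dots,x_n\}$ is a set of continuous decision variables; $\mathbf{D}=\{D_x\}$ where each $x$ takes values in an interval $D_x=[LB_x,UB_x]$; $\mathbf{F}=\{f_1,\dots,f_m\}$ is a set of utility functions, each $f$ defined on $\prod_{x\in \mathrm{scope}(f)} D_x$ with values in $\mathbb{R}\cup\{-\infty\}$; $\alpha:\mathbf{X}\to\mathbf{A}$ maps variables to agents. Each agent controls exactly one variable (agents and variables are identified) and every utility function is binary. The utility of a complete assignment $\mathbf{x}$ is $\mathbf{F}(\mathbf{x})=\sum_{f\in\mathbf{F}} f(\mathbf{x})$, and the goal is to find $\mathbf{x}^*=\arg\max_{\mathbf{x}}\mathbf{F}(\mathbf{x})$. The constraint graph has a node per variable and an edge between two variables sharing a utility function. A pseudo-tree is a rooted spanning tree of the constraint graph (tree edges) such that the two variables of every utility function lie on the same root-to-leaf branch; remaining edges are backedges. The separator of $x_i$ consists of the ancestors of $x_i$ that are connected to $x_i$ or to one of its descendants. Discrete DPOP: after building a pseudo-tree, each variable's domain is replaced by a finite set of discrete points. In the UTIL phase, starting from the leaves, each agent adds the utilities of its functions with its separator and the UTIL tables received from its children, for every combination of discrete values of itself and its separator, then projects out its own variable by maximizing over it, and sends the resulting table (a function of its separator's values) to its parent. In the VALUE phase, starting from the root, each agent picks its best value given the values of its separator and sends the values down to its children. *)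

theory Defs
  imports "HOL-Analysis.Analysis"
begin

text \<open>Variables (= agents) range over a finite type 'v, utility
  functions are indexed by a finite type 'f. Function k has scope (sa k, sb k) and
  utility util_fn k applied to the pair of values (value of sa k, value of sb k).\<close>
record ('v, 'f) fdcop =
  lb :: "'v \<Rightarrow> real"
  ub :: "'v \<Rightarrow> real"
  sa :: "'f \<Rightarrow> 'v"
  sb :: "'f \<Rightarrow> 'v"
  util_fn :: "'f \<Rightarrow> real \<times> real \<Rightarrow> real"

definition total_utility :: "('v, 'f::finite) fdcop \<Rightarrow> ('v \<Rightarrow> real) \<Rightarrow> real" where
  "total_utility P x = (\<Sum>k\<in>UNIV. util_fn P k (x (sa P k), x (sb P k)))"

definition is_assignment :: "('v, 'f) fdcop \<Rightarrow> ('v \<Rightarrow> real) \<Rightarrow> bool" where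
  "is_assignment P x \<longleftrightarrow> (\<forall>v. lb P v \<le> x v \<and> x v \<le> ub P v)"

definition fbox :: "('v, 'f) fdcop \<Rightarrow> 'f \<Rightarrow> (real \<times> real) set" where
  "fbox P k = {lb P (sa P k)..ub P (sa P k)} \<times> {lb P (sb P k)..ub P (sb P k)}"

definition tree_rel :: "('v \<Rightarrow> 'v option) \<Rightarrow> ('v \<times> 'v) set" where
  "tree_rel par = {(p, c). par c = Some p}"

definition anc :: "('v \<Rightarrow> 'v option) \<Rightarrow> 'v \<Rightarrow> 'v \<Rightarrow> bool" where
  "anc par a b \<longleftrightarrow> (a, b) \<in> (tree_rel par)\<^sup>+"

definition is_pseudo_tree :: "('v, 'f) fdcop \<Rightarrow> ('v \<Rightarrow> 'v option) \<Rightarrow> 'v \<Rightarrow> bool" where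
  "is_pseudo_tree P par r \<longleftrightarrow>
     par r = None \<and>
     (\<forall>v. v \<noteq> r \<longrightarrow> par v \<noteq> None \<and> anc par r v) \<and>
     (\<forall>v. \<not> anc par v v) \<and>
     (\<forall>c p. par c = Some p \<longrightarrow> (\<exists>k. {sa P k, sb P k} = {c, p})) \<and>
     (\<forall>k. sa P k \<noteq> sb P k \<and> (anc par (sa P k) (sb P k) \<or> anc par (sb P k) (sa P k)))"

definition children :: "('v \<Rightarrow> 'v option) \<Rightarrow> 'v \<Rightarrow> 'v set" where
  "children par x = {c. par c = Some x}"

text \<open>The agent handling function k: the lower of its two variables in the pseudo-tree
  (the one whose separator contains the other).\<close>
definition handler :: "('v, 'f) fdcop \<Rightarrow> ('v \<Rightarrow> 'v option) \<Rightarrow> 'f \<Rightarrow> 'v" where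
  "handler P par k = (if anc par (sa P k) (sb P k) then sb P k else sa P k)"

definition grid :: "('v, 'f) fdcop \<Rightarrow> real \<Rightarrow> 'v \<Rightarrow> real set" where
  "grid P m v = {lb P v + real n * m | n::nat. lb P v + real n * m \<le> ub P v}"

definition local_util :: "('v, 'f::finite) fdcop \<Rightarrow> ('v \<Rightarrow> 'v option) \<Rightarrow> 'v \<Rightarrow> ('v \<Rightarrow> real) \<Rightarrow> real" where
  "local_util P par x \<sigma> = (\<Sum>k\<in>{k. handler P par k = x}. util_fn P k (\<sigma> (sa P k), \<sigma> (sb P k)))"

text \<open>UTIL messages (with a fuel argument bounding the recursion depth). The
  message of x is a function of the assignment \<sigma>, of which only the separator
  values matter.\<close>
primrec utilmsg :: "('v, 'f::finite) fdcop \<Rightarrow> ('v \<Rightarrow> 'v option) \<Rightarrow> real \<Rightarrow> nat \<Rightarrow> 'v \<Rightarrow> ('v \<Rightarrow> real) \<Rightarrow> real" where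
  "utilmsg P par m 0 x \<sigma> = 0"
| "utilmsg P par m (Suc n) x \<sigma> =
     Max ((\<lambda>d. local_util P par x (\<sigma>(x := d))
              + (\<Sum>c\<in>children par x. utilmsg P par m n c (\<sigma>(x := d)))) ` grid P m x)"

text \<open>The quantity agent x maximizes over its own discrete value in the VALUE phase.\<close>
definition dpop_body :: "('v::finite, 'f::finite) fdcop \<Rightarrow> ('v \<Rightarrow> 'v option) \<Rightarrow> real \<Rightarrow> 'v \<Rightarrow> ('v \<Rightarrow> real) \<Rightarrow> real" where
  "dpop_body P par m x \<sigma> = local_util P par x \<sigma>
      + (\<Sum>c\<in>children par x. utilmsg P par m CARD('v) c \<sigma>)"

text \<open>y is a possible output of discrete DPOP: every agent picks a discrete value
  that is best given the values chosen by its ancestors.\<close>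
definition dpop_output :: "('v::finite, 'f::finite) fdcop \<Rightarrow> ('v \<Rightarrow> 'v option) \<Rightarrow> real \<Rightarrow> ('v \<Rightarrow> real) \<Rightarrow> bool" where
  "dpop_output P par m y \<longleftrightarrow>
     (\<forall>v. y v \<in> grid P m v) \<and>
     (\<forall>v. \<forall>d\<in>grid P m v. dpop_body P par m v (y(v := d)) \<le> dpop_body P par m v y)"

end

theory Submission
  imports Defs
begin

lemma approx_fun:
  fixes f :: "real \<times> real \<Rightarrow> real" and B :: "(real \<times> real) set"
  assumes grad: "\<forall>v\<in>B. \<exists>D. (f has_derivative D) (at v within B) \<and> \<bar>D (1,0)\<bar> + \<bar>D (0,1)\<bar> \<le> \<delta>"
    and Bdef: "B = {a1..b1} \<times> {a2..b2}"
    and zB: "z \<in> B" and xB: "x \<in> B"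
    and h1: "fst z \<le> fst x" "fst x - fst z \<le> m"
    and h2: "snd z \<le> snd x" "snd x - snd z \<le> m"
  shows "f x - f z \<le> m * \<delta>"
proof -
  from grad obtain Df where Df: "\<forall>v\<in>B. (f has_derivative Df v) (at v within B) \<and> \<bar>Df v (1,0)\<bar> + \<bar>Df v (0,1)\<bar> \<le> \<delta>"
    by metis
  define p where "p t = z + t *\<^sub>R (x - z)" for t :: real
  have pB: "p t \<in> B" if "t \<in> {0..1}" for t
  proof -
    have "fst z \<le> fst (p t)" "fst (p t) \<le> fst x" "snd z \<le> snd (p t)" "snd (p t) \<le> snd x"
    proof -
      have "t * (fst x - fst z) \<le> fst x - fst z" "t * (snd x - snd z) \<le> snd x - snd z"
        using that h1 h2 mult_left_le_one_le[of "fst x - fst z" t] mult_left_le_one_le[of "snd x - snd z" t] by auto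
      moreover have "0 \<le> t * (fst x - fst z)" "0 \<le> t * (snd x - snd z)" using that h1 h2 by auto
      ultimately show "fst z \<le> fst (p t)" "fst (p t) \<le> fst x" "snd z \<le> snd (p t)" "snd (p t) \<le> snd x"
        by (simp_all add: p_def)
    qed
    then show ?thesis using zB xB Bdef by (cases "p t") auto
  qed
  have pd: "(p has_derivative (\<lambda>s. s *\<^sub>R (x - z))) (at t within {0..1})" for t
    unfolding p_def by (auto intro!: derivative_eq_intros)
  have gd: "((\<lambda>t. f (p t)) has_derivative (\<lambda>s. Df (p t) (s *\<^sub>R (x - z)))) (at t within {0..1})"
    if "t \<in> {0..1}" for t
    by (rule has_derivative_in_compose2[of B f Df p "{0..1}" t]) (use Df pB that pd in auto)
  have cont: "continuous_on {0..1} (\<lambda>t. f (p t))"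
    by (rule has_derivative_continuous_on) (use gd in blast)
  obtain t where t: "t \<in> {0<..<1}" and tb: "norm (f (p 1) - f (p 0)) \<le> norm (Df (p t) ((1 - 0) *\<^sub>R (x - z)))"
  proof -
    have "\<exists>t\<in>{0<..<1}. norm (f (p 1) - f (p 0)) \<le> norm (Df (p t) ((1 - 0) *\<^sub>R (x - z)))"
    proof (rule mvt_general[of 0 1 "\<lambda>t. f (p t)" "\<lambda>t s. Df (p t) (s *\<^sub>R (x - z))"])
      show "continuous_on {0..1} (\<lambda>t. f (p t))" by (rule cont)
      fix t :: real assume "0 < t" "t < 1"
      then have "at t within {0..1} = at t" by (rule at_within_Icc_at)
      moreover have "((\<lambda>t. f (p t)) has_derivative (\<lambda>s. Df (p t) (s *\<^sub>R (x - z)))) (at t within {0..1})"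
        using gd \<open>0 < t\<close> \<open>t < 1\<close> by simp
      ultimately show "((\<lambda>t. f (p t)) has_derivative (\<lambda>s. Df (p t) (s *\<^sub>R (x - z)))) (at t)" by simp
    qed simp
    then show ?thesis using that by blast
  qed
  have ptB: "p t \<in> B" using t pB by auto
  then have lin: "linear (Df (p t))" using Df has_derivative_linear by blast
  have xz: "x - z = (fst x - fst z) *\<^sub>R (1,0) + (snd x - snd z) *\<^sub>R (0,1)"
    by (cases x; cases z) auto
  have "Df (p t) (x - z) = (fst x - fst z) * Df (p t) (1,0) + (snd x - snd z) * Df (p t) (0,1)"
    by (simp only: xz linear_add[OF lin] linear_scale[OF lin] real_scaleR_def)
  also have "\<bar>\<dots>\<bar> \<le> m * \<bar>Df (p t) (1,0)\<bar> + m * \<bar>Df (p t) (0,1)\<bar>"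
  proof -
    have a: "\<bar>(fst x - fst z) * Df (p t) (1,0)\<bar> \<le> m * \<bar>Df (p t) (1,0)\<bar>"
      using h1 by (simp add: abs_mult mult_right_mono)
    have b: "\<bar>(snd x - snd z) * Df (p t) (0,1)\<bar> \<le> m * \<bar>Df (p t) (0,1)\<bar>"
      using h2 by (simp add: abs_mult mult_right_mono)
    show ?thesis using a b abs_triangle_ineq order_trans add_mono by fastforce
  qed
  also have "\<dots> \<le> m * \<delta>"
  proof -
    have "m \<ge> 0" using h1 by linarith
    then show ?thesis using Df ptB by (metis distrib_left mult_left_mono)
  qed
  finally have "\<bar>Df (p t) (x - z)\<bar> \<le> m * \<delta>" .
  moreover have "p 1 = x" "p 0 = z" by (auto simp: p_def)
  ultimately show ?thesis using tb by simp
qed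


lemma anc_child: "par c = Some p \<Longrightarrow> anc par p c"
  unfolding anc_def tree_rel_def by auto

lemma anc_trans: "anc par a b \<Longrightarrow> anc par b c \<Longrightarrow> anc par a c"
  unfolding anc_def by (meson trancl_trans)

lemma anc_last:
  assumes "anc par a c'" "par c' = Some c" shows "a = c \<or> anc par a c"
proof -
  from assms(1) have "(a,c') \<in> (tree_rel par)\<^sup>+" by (simp add: anc_def)
  then show ?thesis
  proof (cases rule: tranclE)
    case base then show ?thesis using assms(2) by (simp add: tree_rel_def)
  next
    case (step u) then show ?thesis using assms(2) by (simp add: tree_rel_def anc_def)
  qed
qed

lemma anc_no_parent: "anc par a c \<Longrightarrow> par c = None \<Longrightarrow> False"
  unfolding anc_def by (erule tranclE) (auto simp: tree_rel_def)

lemma anc_chain: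
  assumes "anc par a w" "anc par b w" shows "a = b \<or> anc par a b \<or> anc par b a"
proof -
  have "(a,w) \<in> (tree_rel par)\<^sup>+" using assms(1) by (simp add: anc_def)
  then show ?thesis using assms(2)
  proof (induction arbitrary: b rule: trancl_induct)
    case (base w)
    then have "par w = Some a" by (simp add: tree_rel_def)
    from anc_last[OF base.prems this] show ?case by auto
  next
    case (step u w)
    then have pw: "par w = Some u" by (simp add: tree_rel_def)
    from anc_last[OF step.prems pw] have "b = u \<or> anc par b u" .
    then show ?case
    proof
      assume "b = u" then show ?case using step(1) by (simp add: anc_def)
    next
      assume "anc par b u" then show ?case using step.IH by blast
    qed
  qed
qed

fun good :: "('v \<Rightarrow> 'v option) \<Rightarrow> nat \<Rightarrow> 'v \<Rightarrow> bool" where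
  "good par 0 c = False"
| "good par (Suc n) c = (\<forall>c'\<in>children par c. good par n c')"

lemma good_Suc: "good par n c \<Longrightarrow> good par (Suc n) c"
  by (induction n arbitrary: c) auto

lemma good_mono: "n \<le> n' \<Longrightarrow> good par n c \<Longrightarrow> good par n' c"
  by (induction n' rule: dec_induct) (auto intro: good_Suc simp del: good.simps)

lemma finite_grid: assumes "m > 0" shows "finite (grid P m v)"
proof -
  have "{n::nat. lb P v + real n * m \<le> ub P v} \<subseteq> {..nat \<lceil>(ub P v - lb P v)/m\<rceil>}"
  proof
    fix n assume "n \<in> {n::nat. lb P v + real n * m \<le> ub P v}"
    then have "real n \<le> (ub P v - lb P v)/m" using assms by (simp add: field_simps)
    then have "real n \<le> \<lceil>(ub P v - lb P v)/m\<rceil>" by linarith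
    then show "n \<in> {..nat \<lceil>(ub P v - lb P v)/m\<rceil>}" by (simp add: le_nat_iff)
  qed
  then have "finite {n::nat. lb P v + real n * m \<le> ub P v}" by (rule finite_subset) simp
  moreover have "grid P m v = (\<lambda>n. lb P v + real n * m) ` {n. lb P v + real n * m \<le> ub P v}"
    unfolding grid_def by auto
  ultimately show ?thesis by simp
qed

lemma fuel_indep:
  "good par n c \<Longrightarrow> good par n' c \<Longrightarrow> utilmsg P par m n c \<sigma> = utilmsg P par m n' c \<sigma>"
proof (induction n arbitrary: n' c \<sigma>)
  case 0 then show ?case by simp
next
  case (Suc n0)
  then obtain n0' where n': "n' = Suc n0'" by (cases n') auto
  have "(\<Sum>c'\<in>children par c. utilmsg P par m n0 c' (\<sigma>(c:=d))) =
        (\<Sum>c'\<in>children par c. utilmsg P par m n0' c' (\<sigma>(c:=d)))" for d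
    using Suc n' by (intro sum.cong) auto
  then show ?case using n' by simp
qed

locale ptree =
  fixes P :: "('v::finite, 'f::finite) fdcop" and par :: "'v \<Rightarrow> 'v option" and r :: 'v
  assumes pt: "is_pseudo_tree P par r"
begin

lemma irr: "\<not> anc par v v" using pt by (simp add: is_pseudo_tree_def)
lemma root_none: "par r = None" using pt by (simp add: is_pseudo_tree_def)
lemma scope: "sa P k \<noteq> sb P k \<and> (anc par (sa P k) (sb P k) \<or> anc par (sb P k) (sa P k))"
  using pt by (simp add: is_pseudo_tree_def)
lemma below_root: "v \<noteq> r \<Longrightarrow> anc par r v" using pt by (simp add: is_pseudo_tree_def)

lemma no_anc_root: "\<not> anc par a r"
  using anc_no_parent root_none by metis

definition sub where "sub c = {w. w = c \<or> anc par c w}"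

definition S where "S c \<sigma> = (\<Sum>w\<in>sub c. local_util P par w \<sigma>)"

lemma handler_scope: assumes "handler P par k = c"
  shows "(sa P k = c \<or> anc par (sa P k) c) \<and> (sb P k = c \<or> anc par (sb P k) c)"
  using assms scope[of k] unfolding handler_def by (auto split: if_splits)

lemma local_dep: assumes "\<And>w. w = c \<or> anc par w c \<Longrightarrow> \<sigma> w = \<tau> w"
  shows "local_util P par c \<sigma> = local_util P par c \<tau>"
  unfolding local_util_def
proof (rule sum.cong[OF refl])
  fix k assume "k \<in> {k. handler P par k = c}"
  then have "handler P par k = c" by simp
  from handler_scope[OF this] assms show "util_fn P k (\<sigma> (sa P k), \<sigma> (sb P k)) = util_fn P k (\<tau> (sa P k), \<tau> (sb P k))"
    by metis
qed

lemma sub_decomp: "sub c = insert c (\<Union>c'\<in>children par c. sub c')"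
proof
  show "sub c \<subseteq> insert c (\<Union>c'\<in>children par c. sub c')"
  proof
    fix w assume "w \<in> sub c"
    then consider "w = c" | "anc par c w" by (auto simp: sub_def)
    then show "w \<in> insert c (\<Union>c'\<in>children par c. sub c')"
    proof cases
      case 2
      then have "(c,w) \<in> (tree_rel par)\<^sup>+" by (simp add: anc_def)
      then consider (b) "(c,w) \<in> tree_rel par" | (s) u where "(c,u) \<in> tree_rel par" "(u,w) \<in> (tree_rel par)\<^sup>+"
        by (metis converse_tranclE)
      then show ?thesis
      proof cases
        case b then show ?thesis by (auto simp: tree_rel_def children_def sub_def)
      next
        case s then show ?thesis by (auto simp: tree_rel_def children_def sub_def anc_def)
      qed
    qed simp
  qed
next
  show "insert c (\<Union>c'\<in>children par c. sub c') \<subseteq> sub c"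
    by (auto simp: sub_def children_def intro: anc_child anc_trans)
qed

lemma sibling: assumes "par c1 = Some c" "par c2 = Some c" "anc par c2 c1" shows False
proof -
  from anc_last[OF assms(3) assms(1)] consider "c2 = c" | "anc par c2 c" by blast
  then show False
  proof cases
    case 1 then show False using assms(2) anc_child irr by metis
  next
    case 2 then show False using assms(2) anc_child irr anc_trans by metis
  qed
qed

lemma c_notin: "c' \<in> children par c \<Longrightarrow> c \<notin> sub c'"
  unfolding sub_def children_def using irr anc_child anc_trans by fastforce

lemma sub_child: "c' \<in> children par c \<Longrightarrow> sub c' \<subseteq> sub c"
  using sub_decomp[of c] by blast

lemma disj: assumes "c1 \<in> children par c" "c2 \<in> children par c" "c1 \<noteq> c2"
  shows "sub c1 \<inter> sub c2 = {}"
proof (rule ccontr)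
  assume "sub c1 \<inter> sub c2 \<noteq> {}"
  then obtain w where w: "w \<in> sub c1" "w \<in> sub c2" by blast
  have p: "par c1 = Some c" "par c2 = Some c" using assms by (auto simp: children_def)
  have "anc par c2 c1 \<or> anc par c1 c2"
    using w assms(3) anc_chain[of par c1 w c2] by (auto simp: sub_def)
  then show False using sibling p by blast
qed

lemma S_decomp: "S c \<sigma> = local_util P par c \<sigma> + (\<Sum>c'\<in>children par c. S c' \<sigma>)"
proof -
  have "S c \<sigma> = local_util P par c \<sigma> + (\<Sum>w\<in>(\<Union>c'\<in>children par c. sub c'). local_util P par w \<sigma>)"
    unfolding S_def by (subst sub_decomp[of c]) (simp add: sum.insert c_notin)
  also have "(\<Sum>w\<in>(\<Union>c'\<in>children par c. sub c'). local_util P par w \<sigma>) = (\<Sum>c'\<in>children par c. S c' \<sigma>)"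
    unfolding S_def apply (rule sum.UNION_disjoint) apply simp apply simp using disj by blast
  finally show ?thesis .
qed

lemma good_card: "good par (card (sub c)) c"
proof (induction "card (sub c)" arbitrary: c rule: less_induct)
  case less
  have "c \<in> sub c" by (simp add: sub_def)
  then have "card (sub c) > 0" by (auto simp: card_gt_0_iff)
  then obtain k where k: "card (sub c) = Suc k" using gr0_conv_Suc by blast
  have "good par k c'" if "c' \<in> children par c" for c'
  proof -
    have "sub c' \<subset> sub c" using sub_child[OF that] c_notin[OF that] \<open>c \<in> sub c\<close> by blast
    then have lt: "card (sub c') < card (sub c)" by (simp add: psubset_card_mono)
    then have "good par (card (sub c')) c'" by (rule less)
    then show ?thesis using lt k good_mono[of "card (sub c')" k par c'] by simp
  qed
  then show ?case using k by simp
qed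

lemma good_N: "good par CARD('v) c"
  by (rule good_mono[OF _ good_card[of c]]) (simp add: card_mono)

lemma E:
  assumes out: "dpop_output P par m y" and m: "m > 0"
  shows "good par n c \<Longrightarrow> S c y = utilmsg P par m n c y"
proof (induction n arbitrary: c)
  case 0 then show ?case by simp
next
  case (Suc n0)
  have ch: "good par n0 c'" if "c' \<in> children par c" for c' using Suc.prems that by simp
  have "S c y = local_util P par c y + (\<Sum>c'\<in>children par c. S c' y)" by (rule S_decomp)
  also have "\<dots> = local_util P par c y + (\<Sum>c'\<in>children par c. utilmsg P par m CARD('v) c' y)"
  proof -
    have "S c' y = utilmsg P par m CARD('v) c' y" if "c' \<in> children par c" for c'
      using Suc.IH[OF ch[OF that]] fuel_indep[OF ch[OF that] good_N] by simp
    then show ?thesis by simp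
  qed
  also have "\<dots> = dpop_body P par m c y" by (simp add: dpop_body_def)
  finally have 1: "S c y = dpop_body P par m c y" .
  have 2: "utilmsg P par m (Suc n0) c y = Max ((\<lambda>d. dpop_body P par m c (y(c:=d))) ` grid P m c)"
  proof -
    have "(\<Sum>c'\<in>children par c. utilmsg P par m n0 c' (y(c:=d))) =
        (\<Sum>c'\<in>children par c. utilmsg P par m CARD('v) c' (y(c:=d)))" for d
      using fuel_indep[OF ch good_N] by (intro sum.cong) auto
    then show ?thesis by (simp add: dpop_body_def)
  qed
  have 3: "Max ((\<lambda>d. dpop_body P par m c (y(c:=d))) ` grid P m c) = dpop_body P par m c y"
  proof (rule Max_eqI)
    show "finite ((\<lambda>d. dpop_body P par m c (y(c:=d))) ` grid P m c)" by (intro finite_imageI finite_grid[OF m])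
    show "z \<le> dpop_body P par m c y" if "z \<in> (\<lambda>d. dpop_body P par m c (y(c:=d))) ` grid P m c" for z
    proof -
      from that obtain d where d: "d \<in> grid P m c" "z = dpop_body P par m c (y(c:=d))" by blast
      have "\<forall>d\<in>grid P m c. dpop_body P par m c (y(c := d)) \<le> dpop_body P par m c y"
        using out unfolding dpop_output_def by blast
      then show ?thesis using d by blast
    qed
    have "y c \<in> grid P m c" using out by (simp add: dpop_output_def)
    then show "dpop_body P par m c y \<in> (\<lambda>d. dpop_body P par m c (y(c:=d))) ` grid P m c"
      by (metis fun_upd_triv image_eqI)
  qed
  show ?case using 1 2 3 by simp
qed

lemma U:
  assumes m: "m > 0"
  shows "good par n c \<Longrightarrow> (\<forall>w\<in>sub c. \<tau> w \<in> grid P m w) \<Longrightarrow> (\<forall>a. anc par a c \<longrightarrow> \<tau> a = \<sigma> a)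
     \<Longrightarrow> S c \<tau> \<le> utilmsg P par m n c \<sigma>"
proof (induction n arbitrary: c \<sigma>)
  case 0 then show ?case by simp
next
  case (Suc n0)
  define \<sigma>' where "\<sigma>' = \<sigma>(c := \<tau> c)"
  have "S c \<tau> = local_util P par c \<tau> + (\<Sum>c'\<in>children par c. S c' \<tau>)" by (rule S_decomp)
  also have "\<dots> \<le> local_util P par c \<sigma>' + (\<Sum>c'\<in>children par c. utilmsg P par m n0 c' \<sigma>')"
  proof (rule add_mono)
    have "local_util P par c \<tau> = local_util P par c \<sigma>'"
      by (rule local_dep) (use Suc.prems(3) irr in \<open>auto simp: \<sigma>'_def\<close>)
    then show "local_util P par c \<tau> \<le> local_util P par c \<sigma>'" by simp
    show "(\<Sum>c'\<in>children par c. S c' \<tau>) \<le> (\<Sum>c'\<in>children par c. utilmsg P par m n0 c' \<sigma>')"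
    proof (rule sum_mono)
      fix c' assume c': "c' \<in> children par c"
      show "S c' \<tau> \<le> utilmsg P par m n0 c' \<sigma>'"
      proof (rule Suc.IH)
        show "good par n0 c'" using Suc.prems(1) c' by simp
        show "\<forall>w\<in>sub c'. \<tau> w \<in> grid P m w" using Suc.prems(2) sub_child[OF c'] by blast
        show "\<forall>a. anc par a c' \<longrightarrow> \<tau> a = \<sigma>' a"
        proof (intro allI impI)
          fix a assume "anc par a c'"
          then have "a = c \<or> anc par a c" using c' anc_last by (simp add: children_def)
          then show "\<tau> a = \<sigma>' a" using Suc.prems(3) irr by (auto simp: \<sigma>'_def)
        qed
      qed
    qed
  qed
  also have "\<dots> \<le> utilmsg P par m (Suc n0) c \<sigma>"
  proof -
    have "\<tau> c \<in> grid P m c" using Suc.prems(2) by (simp add: sub_def)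
    then have "local_util P par c (\<sigma>(c := \<tau> c)) + (\<Sum>c'\<in>children par c. utilmsg P par m n0 c' (\<sigma>(c := \<tau> c)))
      \<le> Max ((\<lambda>d. local_util P par c (\<sigma>(c := d)) + (\<Sum>c'\<in>children par c. utilmsg P par m n0 c' (\<sigma>(c := d)))) ` grid P m c)"
      by (intro Max_ge finite_imageI finite_grid[OF m] imageI)
    then show ?thesis unfolding \<sigma>'_def by simp
  qed
  finally show ?case .
qed

lemma total_S: "total_utility P \<sigma> = S r \<sigma>"
proof -
  have "sub r = UNIV" using below_root by (auto simp: sub_def)
  then have "S r \<sigma> = (\<Sum>v\<in>UNIV. local_util P par v \<sigma>)" by (simp add: S_def)
  also have "\<dots> = (\<Sum>k\<in>UNIV. util_fn P k (\<sigma> (sa P k), \<sigma> (sb P k)))"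
    unfolding local_util_def using sum.group[of UNIV UNIV "handler P par" "\<lambda>k. util_fn P k (\<sigma> (sa P k), \<sigma> (sb P k))"]
    by simp
  finally show ?thesis by (simp add: total_utility_def)
qed

lemma dpop_opt:
  assumes out: "dpop_output P par m y" and m: "m > 0" and z: "\<forall>v. z v \<in> grid P m v"
  shows "total_utility P z \<le> total_utility P y"
proof -
  have "S r z \<le> utilmsg P par m CARD('v) r y"
    by (rule U[OF m good_N]) (use z no_anc_root in simp_all)
  also have "\<dots> = S r y" using E[OF out m good_N] by simp
  finally show ?thesis by (simp add: total_S)
qed

end

theorem theorem1:
  fixes P :: "('v::finite, 'f::finite) fdcop"
    and par :: "'v \<Rightarrow> 'v option" and r :: 'v
    and m \<delta> :: real and y :: "'v \<Rightarrow> real"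
  assumes dom: "\<forall>v. lb P v \<le> ub P v"
    and m_pos: "m > 0"
    and pt: "is_pseudo_tree P par r"
    and grad: "\<forall>k. \<forall>v\<in>fbox P k. \<exists>D. (util_fn P k has_derivative D) (at v within fbox P k)
                      \<and> \<bar>D (1, 0)\<bar> + \<bar>D (0, 1)\<bar> \<le> \<delta>"
    and out: "dpop_output P par m y"
  shows "\<forall>x. is_assignment P x \<longrightarrow>
           total_utility P y \<ge> total_utility P x - real CARD('f) * m * \<delta>"
proof (intro allI impI)
  interpret ptree P par r by unfold_locales (rule pt)
  fix x assume xa: "is_assignment P x"
  define z where "z v = lb P v + real (nat \<lfloor>(x v - lb P v)/m\<rfloor>) * m" for v
  have zprops: "z v \<in> grid P m v \<and> lb P v \<le> z v \<and> z v \<le> x v \<and> x v - z v \<le> m" for v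
  proof -
    define q where "q = (x v - lb P v)/m"
    have xb: "lb P v \<le> x v" "x v \<le> ub P v" using xa by (auto simp: is_assignment_def)
    have q0: "q \<ge> 0" using xb m_pos by (simp add: q_def)
    have fl: "real (nat \<lfloor>q\<rfloor>) = of_int \<lfloor>q\<rfloor>" using q0 by simp
    have a: "of_int \<lfloor>q\<rfloor> \<le> q" "q < of_int \<lfloor>q\<rfloor> + 1" by linarith+
    have b1: "of_int \<lfloor>q\<rfloor> * m \<le> x v - lb P v" using mult_right_mono[OF a(1), of m] m_pos by (simp add: q_def)
    have b2: "x v - lb P v < (of_int \<lfloor>q\<rfloor> + 1) * m" using mult_strict_right_mono[OF a(2) m_pos] m_pos by (simp add: q_def)
    have zq: "z v = lb P v + of_int \<lfloor>q\<rfloor> * m" by (simp add: z_def fl[unfolded q_def] q_def)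
    have nn: "0 \<le> of_int \<lfloor>q\<rfloor> * m" using q0 m_pos by simp
    have "z v \<in> grid P m v" unfolding grid_def
      using zq fl b1 xb by (intro CollectI exI[of _ "nat \<lfloor>q\<rfloor>"]) (auto simp: z_def q_def)
    then show ?thesis using zq b1 b2 nn by (auto simp: algebra_simps)
  qed
  have zgrid: "\<forall>v. z v \<in> grid P m v" using zprops by blast
  have per: "util_fn P k (x (sa P k), x (sb P k)) - util_fn P k (z (sa P k), z (sb P k)) \<le> m * \<delta>" for k
  proof (rule approx_fun[where B = "fbox P k"])
    show "\<forall>v\<in>fbox P k. \<exists>D. (util_fn P k has_derivative D) (at v within fbox P k) \<and> \<bar>D (1, 0)\<bar> + \<bar>D (0, 1)\<bar> \<le> \<delta>"
      using grad by blast
    show "fbox P k = {lb P (sa P k)..ub P (sa P k)} \<times> {lb P (sb P k)..ub P (sb P k)}" by (simp add: fbox_def)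
    show "(z (sa P k), z (sb P k)) \<in> fbox P k" "(x (sa P k), x (sb P k)) \<in> fbox P k"
      using zprops xa by (auto simp: fbox_def is_assignment_def intro: order_trans)
  qed (use zprops in auto)
  have "total_utility P x - real CARD('f) * m * \<delta> = (\<Sum>k\<in>UNIV. util_fn P k (x (sa P k), x (sb P k)) - m * \<delta>)"
    by (simp add: total_utility_def sum_subtractf)
  also have "\<dots> \<le> (\<Sum>k\<in>UNIV. util_fn P k (z (sa P k), z (sb P k)))"
    by (rule sum_mono) (use per in \<open>simp add: algebra_simps\<close>)
  also have "\<dots> = total_utility P z" by (simp add: total_utility_def)
  also have "\<dots> \<le> total_utility P y" by (rule dpop_opt[OF out m_pos zgrid])
  finally show "total_utility P y \<ge> total_utility P x - real CARD('f) * m * \<delta>" .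
qed

end
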